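(* Let $H\in\mathbb R^{d\times p}$ have rank $d$ and let $\prec$ be a partial order on $[d]$. Then there exists a unique partial order RQ decomposition $H=RQ$ of $H$ with respect to $\prec$. If moreover $\prec$ is consistent with the total order $1,2,\dots,d$ (i.e. $i\prec j$ implies $i<j$), then this decomposition is produced by the following procedure: for $i=d,d-1,\dots,1$, let $\mathbf h_i$ be the $i$-th row of $H$, let $W_i=\langle\mathbf q_j:j\succ i\rangle$, set $\mathbf q_i:=\mathrm{proj}_{W_i^\perp}\mathbf h_i/\|\mathrm{proj}_{W_i^\perp}\mathbf h_i\|_2$ as the $i$-th row of $Q$, let $Q_{\succeq i}$ be the submatrix of $Q$ consisting of the rows $\mathbf q_j$ with $j\succeq i$, let $\mathbf r:=(Q_{\succeq i}^\top)^\dagger\mathbf h_i^\top$, and set $R_{ij}$ equal to the entry of $\mathbf r$ corresponding to row $j$ for each $j\succeq i$, and $R_{ij}=0$ otherwise.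
   Context: $[d]=\{1,\dots,d\}$; $i\preceq j$ means $i\prec j$ or $i=j$; $\langle\cdot\rangle$ denotes linear span; $M^\dagger$ the Moore–Penrose pseudoinverse. Given a partial order $\prec$ on $[d]$, a partial order RQ decomposition of $H\in\mathbb R^{d\times p}$ is a factorization $H=RQ$ with $R\in\mathbb R^{d\times d}$ satisfying $R_{ii}\ge0$ and $R_{ij}=0$ unless $i\preceq j$, and $Q\in\mathbb R^{d\times p}$ whose $i$-th row $\mathbf q_i$ has Euclidean norm $1$ and is orthogonal to $\langle\mathbf q_j:i\prec j\rangle$. *)

theory Defs
  imports "Jordan_Normal_Form.DL_Rank" "Jordan_Normal_Form.DL_Submatrix"
begin

(* Row/column indices are 0-based, so the index set [d] = {1..d} of the paper
   is rendered as {0..<d} (index i here corresponds to i+1 in the paper). *)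

definition lin_span :: "nat \<Rightarrow> real vec set \<Rightarrow> real vec set" where
  "lin_span n S = {v. \<exists>F c. finite F \<and> F \<subseteq> S \<and>
      v = finsum_vec TYPE(real) n (\<lambda>w. c w \<cdot>\<^sub>v w) F}"

definition vnorm :: "real vec \<Rightarrow> real" where
  "vnorm v = sqrt (v \<bullet> v)"

definition proj_perp :: "nat \<Rightarrow> real vec set \<Rightarrow> real vec \<Rightarrow> real vec" where
  "proj_perp n W h = (THE u. u \<in> carrier_vec n \<and> (\<forall>w\<in>W. u \<bullet> w = 0) \<and> h - u \<in> W)"

definition pinv :: "real mat \<Rightarrow> real mat" where
  "pinv A = (THE X. X \<in> carrier_mat (dim_col A) (dim_row A) \<and>
      A * X * A = A \<and> X * A * X = X \<and>
      transpose_mat (A * X) = A * X \<and> transpose_mat (X * A) = X * A)"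

definition strict_po_on :: "nat \<Rightarrow> (nat \<Rightarrow> nat \<Rightarrow> bool) \<Rightarrow> bool" where
  "strict_po_on d lt \<longleftrightarrow> (\<forall>i<d. \<not> lt i i) \<and>
      (\<forall>i<d. \<forall>j<d. \<forall>k<d. lt i j \<longrightarrow> lt j k \<longrightarrow> lt i k)"

definition is_poRQ :: "nat \<Rightarrow> nat \<Rightarrow> (nat \<Rightarrow> nat \<Rightarrow> bool) \<Rightarrow> real mat \<Rightarrow> real mat \<Rightarrow> real mat \<Rightarrow> bool" where
  "is_poRQ d p lt H R Q \<longleftrightarrow>
     R \<in> carrier_mat d d \<and> Q \<in> carrier_mat d p \<and> H = R * Q \<and>
     (\<forall>i<d. R $$ (i, i) \<ge> 0) \<and>
     (\<forall>i<d. \<forall>j<d. \<not> (lt i j \<or> i = j) \<longrightarrow> R $$ (i, j) = 0) \<and>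
     (\<forall>i<d. vnorm (row Q i) = 1) \<and>
     (\<forall>i<d. \<forall>v\<in>lin_span p {row Q j | j. j < d \<and> lt i j}. row Q i \<bullet> v = 0)"

text \<open>The procedure.  qsteps lt H k holds the rows q_i computed after the first k steps,
  i.e. for i = d-1, ..., d-k (steps run i = d-1 down to 0); unset rows are zero.\<close>
fun qsteps :: "(nat \<Rightarrow> nat \<Rightarrow> bool) \<Rightarrow> real mat \<Rightarrow> nat \<Rightarrow> (nat \<Rightarrow> real vec)" where
  "qsteps lt H 0 = (\<lambda>j. 0\<^sub>v (dim_col H))"
| "qsteps lt H (Suc k) =
     (let f = qsteps lt H k;
          i = dim_row H - Suc k;
          W = lin_span (dim_col H) {f j | j. j < dim_row H \<and> lt i j};
          u = proj_perp (dim_col H) W (row H i)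
      in f(i := (1 / vnorm u) \<cdot>\<^sub>v u))"

definition procQ :: "(nat \<Rightarrow> nat \<Rightarrow> bool) \<Rightarrow> real mat \<Rightarrow> real mat" where
  "procQ lt H = mat (dim_row H) (dim_col H) (\<lambda>(i, j). qsteps lt H (dim_row H) i $ j)"

text \<open>Row i of R: r = (Q_{>=i}^T)^dagger h_i^T, where Q_{>=i} is the submatrix of Q of rows
  j with i <= j (in increasing order of j); the entry of r corresponding to row j is the
  entry at position card {a in S. a < j}.\<close>
definition procR :: "(nat \<Rightarrow> nat \<Rightarrow> bool) \<Rightarrow> real mat \<Rightarrow> real mat" where
  "procR lt H = mat (dim_row H) (dim_row H) (\<lambda>(i, j).
     (let S = {a. lt i a \<or> a = i};
          Qsub = submatrix (procQ lt H) S UNIV;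
          r = pinv (transpose_mat Qsub) *\<^sub>v row H i
      in if j \<in> S then r $ card {a \<in> S. a < j} else 0))"

end

theory Submission
  imports Defs
begin


definition comb :: "nat \<Rightarrow> nat set \<Rightarrow> (nat \<Rightarrow> real) \<Rightarrow> (nat \<Rightarrow> real vec) \<Rightarrow> real vec" where
  "comb p J a f = vec p (\<lambda>l. \<Sum>j\<in>J. a j * f j $ l)"

definition cspan :: "nat \<Rightarrow> nat set \<Rightarrow> (nat \<Rightarrow> real vec) \<Rightarrow> real vec set" where
  "cspan p J f = {v. \<exists>a. v = comb p J a f}"

lemma comb_carrier[simp]: "comb p J a f \<in> carrier_vec p"
  by (simp add: comb_def)
lemma comb_dim[simp]: "dim_vec (comb p J a f) = p"
  by (simp add: comb_def)
lemma comb_index[simp]: "l < p \<Longrightarrow> comb p J a f $ l = (\<Sum>j\<in>J. a j * f j $ l)"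
  by (simp add: comb_def)

lemma cspan_carrier: "v \<in> cspan p J f \<Longrightarrow> v \<in> carrier_vec p"
  by (auto simp: cspan_def)

lemma comb_add: "comb p J a f + comb p J b f = comb p J (\<lambda>j. a j + b j) f"
  by (rule eq_vecI) (auto simp: sum.distrib algebra_simps)

lemma comb_diff: "comb p J a f - comb p J b f = comb p J (\<lambda>j. a j - b j) f"
  by (rule eq_vecI) (auto simp: sum_subtractf algebra_simps)

lemma comb_smult: "c \<cdot>\<^sub>v comb p J a f = comb p J (\<lambda>j. c * a j) f"
  by (rule eq_vecI) (auto simp: sum_distrib_left algebra_simps)

lemma comb_insert: "finite J \<Longrightarrow> s \<notin> J \<Longrightarrow> f s \<in> carrier_vec p \<Longrightarrow>
   comb p (insert s J) a f = a s \<cdot>\<^sub>v f s + comb p J a f"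
  by (rule eq_vecI) auto

lemma comb_mono: "finite J' \<Longrightarrow> J \<subseteq> J' \<Longrightarrow> comb p J a f = comb p J' (\<lambda>j. if j \<in> J then a j else 0) f"
  apply (rule eq_vecI)
   apply simp
   apply (rule sum.mono_neutral_cong_left)
  by auto

lemma cspan_mono: "finite J' \<Longrightarrow> J \<subseteq> J' \<Longrightarrow> cspan p J f \<subseteq> cspan p J' f"
  unfolding cspan_def using comb_mono by blast

lemma comb_in_cspan[simp]: "comb p J a f \<in> cspan p J f"
  unfolding cspan_def by blast

lemma gen_in_cspan: "finite J \<Longrightarrow> j \<in> J \<Longrightarrow> f j \<in> carrier_vec p \<Longrightarrow> f j \<in> cspan p J f"
  unfolding cspan_def mem_Collect_eq
  apply (rule exI[of _ "\<lambda>k. if k = j then 1 else 0"])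
  apply (rule eq_vecI)
  apply (simp_all only: comb_dim comb_index carrier_vecD)
  apply (subgoal_tac "(\<Sum>k\<in>J. (if k = j then 1 else 0) * f k $ i) = (\<Sum>k\<in>J. if k = j then f k $ i else 0)")
  apply simp
  apply (intro sum.cong)
  by auto

lemma cspan_add: "v \<in> cspan p J f \<Longrightarrow> w \<in> cspan p J f \<Longrightarrow> v + w \<in> cspan p J f"
  unfolding cspan_def using comb_add by blast
lemma cspan_diff: "v \<in> cspan p J f \<Longrightarrow> w \<in> cspan p J f \<Longrightarrow> v - w \<in> cspan p J f"
  unfolding cspan_def using comb_diff by blast
lemma cspan_smult: "v \<in> cspan p J f \<Longrightarrow> c \<cdot>\<^sub>v v \<in> cspan p J f"
  unfolding cspan_def using comb_smult by blast
lemma cspan_zero: "0\<^sub>v p \<in> cspan p J f"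
  unfolding cspan_def mem_Collect_eq
  by (rule exI[of _ "\<lambda>_. 0"], rule eq_vecI, auto)

lemma comb_trans:
  assumes "\<And>k. k \<in> K \<Longrightarrow> g k \<in> cspan p J f"
  shows "comb p K b g \<in> cspan p J f"
proof -
  have "\<forall>k. \<exists>a. k \<in> K \<longrightarrow> g k = comb p J a f" using assms unfolding cspan_def by blast
  then obtain A where A: "\<And>k. k \<in> K \<Longrightarrow> g k = comb p J (A k) f" by metis
  have "comb p K b g = comb p J (\<lambda>j. \<Sum>k\<in>K. b k * A k j) f"
  proof (rule eq_vecI)
    fix l assume "l < dim_vec (comb p J (\<lambda>j. \<Sum>k\<in>K. b k * A k j) f)"
    then have l: "l < p" by simp
    have "comb p K b g $ l = (\<Sum>k\<in>K. b k * (\<Sum>j\<in>J. A k j * f j $ l))"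
      using l A by (simp)
    also have "\<dots> = (\<Sum>k\<in>K. \<Sum>j\<in>J. b k * (A k j * f j $ l))"
      by (simp add: sum_distrib_left)
    also have "\<dots> = (\<Sum>j\<in>J. \<Sum>k\<in>K. b k * (A k j * f j $ l))"
      by (rule sum.swap)
    also have "\<dots> = (\<Sum>j\<in>J. (\<Sum>k\<in>K. b k * A k j) * f j $ l)"
      by (simp add: sum_distrib_right mult.assoc)
    finally show "comb p K b g $ l = comb p J (\<lambda>j. \<Sum>k\<in>K. b k * A k j) f $ l"
      using l by simp
  qed simp
  then show ?thesis by simp
qed

lemma cspan_trans:
  assumes "\<And>k. k \<in> K \<Longrightarrow> g k \<in> cspan p J f" "v \<in> cspan p K g"
  shows "v \<in> cspan p J f"
proof -
  obtain b where "v = comb p K b g" using assms(2) unfolding cspan_def by blast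
  then show ?thesis using comb_trans[OF assms(1)] by simp
qed

lemma dot_comb: "x \<bullet> comb p J a f = (\<Sum>j\<in>J. a j * (x \<bullet> f j))" if "\<And>j. j \<in> J \<Longrightarrow> f j \<in> carrier_vec p"
proof -
  have "x \<bullet> comb p J a f = (\<Sum>l<p. x $ l * (\<Sum>j\<in>J. a j * f j $ l))"
    unfolding scalar_prod_def by (simp add: atLeast0LessThan)
  also have "\<dots> = (\<Sum>l<p. \<Sum>j\<in>J. a j * (x $ l * f j $ l))"
    by (simp add: sum_distrib_left mult.left_commute)
  also have "\<dots> = (\<Sum>j\<in>J. \<Sum>l<p. a j * (x $ l * f j $ l))"
    by (rule sum.swap)
  also have "\<dots> = (\<Sum>j\<in>J. a j * (\<Sum>l<p. x $ l * f j $ l))"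
    by (simp add: sum_distrib_left)
  also have "\<dots> = (\<Sum>j\<in>J. a j * (x \<bullet> f j))"
  proof (intro sum.cong refl)
    fix j assume "j \<in> J"
    then have "dim_vec (f j) = p" using that carrier_vecD by blast
    then show "a j * (\<Sum>l<p. x $ l * f j $ l) = a j * (x \<bullet> f j)"
      unfolding scalar_prod_def by (simp add: atLeast0LessThan)
  qed
  finally show ?thesis .
qed

lemma ortho_cspan: assumes "\<And>j. j \<in> J \<Longrightarrow> f j \<in> carrier_vec p" "\<And>j. j \<in> J \<Longrightarrow> x \<bullet> f j = 0"
  and "w \<in> cspan p J f" shows "x \<bullet> w = 0"
proof -
  obtain b where "w = comb p J b f" using assms(3) unfolding cspan_def by blast
  then show ?thesis using dot_comb[OF assms(1)] assms(2) by simp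
qed

lemma lin_span_eq:
  assumes fin: "finite J" and car: "\<And>j. j \<in> J \<Longrightarrow> f j \<in> carrier_vec p"
  shows "lin_span p (f ` J) = cspan p J f"
proof
  show "lin_span p (f ` J) \<subseteq> cspan p J f"
  proof
    fix v assume "v \<in> lin_span p (f ` J)"
    then obtain F c where F: "finite F" "F \<subseteq> f ` J" and v: "v = finsum_vec TYPE(real) p (\<lambda>w. c w \<cdot>\<^sub>v w) F"
      unfolding lin_span_def by blast
    define g where "g = inv_into J f"
    have gi: "inj_on g F" using F(2) unfolding g_def by (meson inj_on_inv_into)
    have gJ: "g ` F \<subseteq> J" using F(2) unfolding g_def by (auto intro: inv_into_into)
    have fg: "\<And>w. w \<in> F \<Longrightarrow> f (g w) = w" using F(2) unfolding g_def by (meson f_inv_into_f subsetD)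
    have Fc: "F \<subseteq> carrier_vec p" using F(2) car by auto
    have "v = comb p J (\<lambda>j. if j \<in> g ` F then c (f j) else 0) f"
    proof (rule eq_vecI)
      have vc: "v \<in> carrier_vec p" unfolding v using Fc by (intro finsum_vec_closed) auto
      then show "dim_vec v = dim_vec (comb p J (\<lambda>j. if j \<in> g ` F then c (f j) else 0) f)" by simp
      fix l assume "l < dim_vec (comb p J (\<lambda>j. if j \<in> g ` F then c (f j) else 0) f)"
      then have l: "l < p" by simp
      have "v $ l = (\<Sum>w\<in>F. c w * w $ l)"
        unfolding v using Fc l F(1) by (subst index_finsum_vec) (auto intro!: sum.cong simp: subset_iff)
      also have "\<dots> = (\<Sum>j\<in>g ` F. c (f j) * f j $ l)"
        by (subst sum.reindex[OF gi]) (simp add: fg)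
      also have "\<dots> = (\<Sum>j\<in>J. (if j \<in> g ` F then c (f j) else 0) * f j $ l)"
        using gJ fin by (intro sum.mono_neutral_cong_left) auto
      finally show "v $ l = comb p J (\<lambda>j. if j \<in> g ` F then c (f j) else 0) f $ l" using l by simp
    qed
    then show "v \<in> cspan p J f" by simp
  qed
next
  show "cspan p J f \<subseteq> lin_span p (f ` J)"
  proof
    fix v assume "v \<in> cspan p J f"
    then obtain a where v: "v = comb p J a f" unfolding cspan_def by blast
    define c where "c w = (\<Sum>j\<in>{j\<in>J. f j = w}. a j)" for w
    have Fc: "f ` J \<subseteq> carrier_vec p" using car by auto
    have clo: "finsum_vec TYPE(real) p (\<lambda>w. c w \<cdot>\<^sub>v w) (f ` J) \<in> carrier_vec p"
      by (rule finsum_vec_closed) (use Fc in auto)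
    have "v = finsum_vec TYPE(real) p (\<lambda>w. c w \<cdot>\<^sub>v w) (f ` J)"
    proof (rule eq_vecI)
      fix l assume "l < dim_vec (finsum_vec TYPE(real) p (\<lambda>w. c w \<cdot>\<^sub>v w) (f ` J))"
      then have l: "l < p" using clo by simp
      have "finsum_vec TYPE(real) p (\<lambda>w. c w \<cdot>\<^sub>v w) (f ` J) $ l = (\<Sum>w\<in>f ` J. c w * w $ l)"
        using Fc l fin by (subst index_finsum_vec) (auto intro!: sum.cong simp: subset_iff)
      also have "\<dots> = (\<Sum>w\<in>f ` J. (\<Sum>j\<in>{j\<in>J. f j = w}. a j * f j $ l))"
        unfolding c_def by (intro sum.cong refl) (auto simp: sum_distrib_right)
      also have "\<dots> = (\<Sum>j\<in>J. a j * f j $ l)"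
        using fin by (rule sum.image_gen[symmetric])
      finally show "v $ l = finsum_vec TYPE(real) p (\<lambda>w. c w \<cdot>\<^sub>v w) (f ` J) $ l" using l v by simp
    next
      show "dim_vec v = dim_vec (finsum_vec TYPE(real) p (\<lambda>w. c w \<cdot>\<^sub>v w) (f ` J))"
        using clo v by simp
    qed
    then show "v \<in> lin_span p (f ` J)" unfolding lin_span_def using fin by blast
  qed
qed



lemma self_dot_zero:
  fixes v :: "real vec"
  assumes "v \<in> carrier_vec p" "v \<bullet> v = 0" shows "v = 0\<^sub>v p"
proof -
  have "(\<Sum>i\<in>{0..<p}. v $ i * v $ i) = 0" using assms unfolding scalar_prod_def by auto
  then have "\<forall>i\<in>{0..<p}. v $ i * v $ i = 0"
    by (subst sum_nonneg_eq_0_iff[symmetric]) auto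
  then show ?thesis using assms(1) by (intro eq_vecI) auto
qed

lemma rows_indep:
  fixes H :: "real mat"
  assumes H: "H \<in> carrier_mat d p" and rk: "vec_space.rank d H = d"
    and z: "\<And>l. l < p \<Longrightarrow> (\<Sum>j<d. c j * H $$ (j, l)) = 0" and j: "j < d"
  shows "c j = 0"
proof -
  interpret V: vec_space "TYPE(real)" d .
  obtain S where S: "maximal S (\<lambda>T. T \<subseteq> set (cols H) \<and> V.lin_indpt T)"
    using maximal_exists[of "(\<lambda>T. T \<subseteq> set (cols H) \<and> V.lin_indpt T)" "card (set (cols H))" "{}"]
    by (meson List.finite_set card_mono empty_iff empty_subsetI V.finite_lin_indpt2 rev_finite_subset)
  have cardS: "card S = d" using V.rank_card_indpt[OF H S] rk by simp
  have Scols: "S \<subseteq> set (cols H)" and li: "V.lin_indpt S" using S unfolding maximal_def by auto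
  have Sc: "S \<subseteq> carrier_vec d" using Scols H cols_dim by blast
  have finS: "finite S" using Scols finite_subset by blast
  have "V.basis S" using V.dim_li_is_basis[OF V.fin_dim finS Sc li] cardS V.dim_is_n by simp
  then have spanS: "V.span S = carrier_vec d" unfolding V.basis_def by simp
  define cv where "cv = vec d c"
  have cvc: "cv \<in> carrier_vec d" unfolding cv_def by simp
  then obtain a A where A: "cv = V.lincomb a A" "finite A" "A \<subseteq> S"
    using spanS unfolding V.span_def by blast
  have orth: "cv \<bullet> x = 0" if "x \<in> S" for x
  proof -
    from that Scols have "x \<in> set (cols H)" by auto
    then obtain l where l0: "l < length (cols H)" "x = cols H ! l" by (auto simp: in_set_conv_nth)
    then have l: "l < p" "x = col H l" using H by auto
    have "cv \<bullet> x = (\<Sum>i\<in>{0..<d}. c i * H $$ (i, l))"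
      unfolding scalar_prod_def l(2) cv_def using H l by (auto intro!: sum.cong)
    also have "\<dots> = 0" using z[OF l(1)] by (simp add: atLeast0LessThan)
    finally show ?thesis .
  qed
  have Ac: "A \<subseteq> carrier_vec d" using A Sc by auto
  have "cv \<bullet> cv = (\<Sum>i\<in>{0..<d}. cv $ i * cv $ i)" by (simp add: scalar_prod_def cv_def)
  also have "\<dots> = (\<Sum>i\<in>{0..<d}. c i * (\<Sum>x\<in>A. a x * x $ i))"
  proof (intro sum.cong refl)
    fix i assume i: "i \<in> {0..<d}"
    have "cv $ i = (\<Sum>x\<in>A. a x * x $ i)" unfolding A(1) using i Ac by (simp add: V.lincomb_index)
    moreover have "cv $ i = c i" using i by (simp add: cv_def)
    ultimately show "cv $ i * cv $ i = c i * (\<Sum>x\<in>A. a x * x $ i)" by simp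
  qed
  also have "\<dots> = (\<Sum>i\<in>{0..<d}. \<Sum>x\<in>A. a x * (c i * x $ i))"
    by (simp add: sum_distrib_left mult.left_commute)
  also have "\<dots> = (\<Sum>x\<in>A. \<Sum>i\<in>{0..<d}. a x * (c i * x $ i))"
    by (rule sum.swap)
  also have "\<dots> = (\<Sum>x\<in>A. a x * (cv \<bullet> x))"
  proof (intro sum.cong refl)
    fix x assume "x \<in> A"
    then have "dim_vec x = d" using Ac by auto
    then show "(\<Sum>i\<in>{0..<d}. a x * (c i * x $ i)) = a x * (cv \<bullet> x)"
      unfolding scalar_prod_def cv_def by (simp add: sum_distrib_left)
  qed
  also have "\<dots> = 0"
  proof (intro sum.neutral ballI)
    fix x assume "x \<in> A" then show "a x * (cv \<bullet> x) = 0" using orth A(3) by auto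
  qed
  finally have "cv = 0\<^sub>v d" using self_dot_zero[OF cvc] by simp
  then show ?thesis using j unfolding cv_def by (metis index_vec index_zero_vec(1))
qed



lemma ortho_cspan': assumes "\<forall>j\<in>J. f j \<in> carrier_vec p" "\<forall>j\<in>J. x \<bullet> f j = 0"
  and "w \<in> cspan p J f" shows "x \<bullet> w = 0"
  using ortho_cspan[of J f p x w] assms by blast

lemma proj_exists:
  assumes "finite J" "\<And>j. j \<in> J \<Longrightarrow> f j \<in> carrier_vec p" "h \<in> carrier_vec p"
  shows "\<exists>u. u \<in> carrier_vec p \<and> (\<forall>j\<in>J. u \<bullet> f j = 0) \<and> h - u \<in> cspan p J f"
  using assms
proof (induction J arbitrary: h rule: finite_induct)
  case empty
  then show ?case using cspan_zero[of p "{}" f] by (intro exI[of _ h]) auto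
next
  case (insert s J)
  have fJ: "\<And>j. j \<in> J \<Longrightarrow> f j \<in> carrier_vec p" using insert by auto
  have fs: "f s \<in> carrier_vec p" using insert by auto
  obtain u where u: "u \<in> carrier_vec p" "\<forall>j\<in>J. u \<bullet> f j = 0" "h - u \<in> cspan p J f"
    using insert.IH[OF fJ insert.prems(2)] by blast
  obtain t where t: "t \<in> carrier_vec p" "\<forall>j\<in>J. t \<bullet> f j = 0" "f s - t \<in> cspan p J f"
    using insert.IH[OF fJ fs] by blast
  have mono: "cspan p J f \<subseteq> cspan p (insert s J) f" using insert by (intro cspan_mono) auto
  have fsin: "f s \<in> cspan p (insert s J) f" using insert fs by (intro gen_in_cspan) auto
  define w where "w = f s - t"
  have wc: "w \<in> carrier_vec p" unfolding w_def using fs t by simp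
  have fsw: "f s = t + w" unfolding w_def using fs t by (intro eq_vecI) auto
  show ?case
  proof (cases "t \<bullet> t = 0")
    case True
    then have t0: "t = 0\<^sub>v p" using self_dot_zero t(1) by blast
    have fsJ: "f s \<in> cspan p J f" using t(3) unfolding t0 using fs by simp
    have "u \<bullet> f s = 0" using ortho_cspan'[OF _ u(2) fsJ] fJ by blast
    then show ?thesis using u mono by (intro exI[of _ u]) auto
  next
    case False
    define c where "c = (u \<bullet> t) / (t \<bullet> t)"
    define u' where "u' = u - c \<cdot>\<^sub>v t"
    have u'c: "u' \<in> carrier_vec p" unfolding u'_def using u t by simp
    have oJ: "u' \<bullet> f j = 0" if "j \<in> J" for j
      unfolding u'_def using u t fJ[OF that] that
      by (simp add: minus_scalar_prod_distrib[of _ p])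
    have "u' \<bullet> t = u \<bullet> t - c * (t \<bullet> t)"
      unfolding u'_def using u t by (simp add: minus_scalar_prod_distrib[of _ p])
    also have "\<dots> = 0" unfolding c_def using False by simp
    finally have ot: "u' \<bullet> t = 0" .
    have oJ': "\<forall>j\<in>J. u' \<bullet> f j = 0" using oJ by blast
    have wJ: "w \<in> cspan p J f" using t(3) unfolding w_def .
    have ow: "u' \<bullet> w = 0" using ortho_cspan'[OF _ oJ' wJ] fJ by blast
    have os: "u' \<bullet> f s = 0" unfolding fsw using ot ow u'c t wc
      by (simp add: scalar_prod_add_distrib[of _ p])
    have tin: "t \<in> cspan p (insert s J) f"
    proof -
      have "t = f s - w" unfolding w_def using fs t by (intro eq_vecI) auto
      then show ?thesis using fsin mono t(3) unfolding w_def[symmetric] by (auto intro: cspan_diff)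
    qed
    have "h - u' = (h - u) + c \<cdot>\<^sub>v t" unfolding u'_def using u t insert.prems(2)
      by (intro eq_vecI) auto
    then have "h - u' \<in> cspan p (insert s J) f"
      using u(3) mono tin by (auto intro!: cspan_add cspan_smult)
    then show ?thesis using u'c oJ os by (intro exI[of _ u']) auto
  qed
qed

lemma proj_unique:
  assumes "\<And>j. j \<in> J \<Longrightarrow> f j \<in> carrier_vec p" "h \<in> carrier_vec p"
    and "u1 \<in> carrier_vec p" "\<forall>j\<in>J. u1 \<bullet> f j = 0" "h - u1 \<in> cspan p J f"
    and "u2 \<in> carrier_vec p" "\<forall>j\<in>J. u2 \<bullet> f j = 0" "h - u2 \<in> cspan p J f"
  shows "u1 = u2"
proof -
  have e: "u1 - u2 = (h - u2) - (h - u1)" using assms by (intro eq_vecI) auto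
  have mem: "u1 - u2 \<in> cspan p J f" unfolding e by (rule cspan_diff[OF assms(8) assms(5)])
  have a1: "u1 \<bullet> (u1 - u2) = 0"
    by (rule ortho_cspan'[OF _ assms(4) mem]) (use assms(1) in blast)
  have a2: "u2 \<bullet> (u1 - u2) = 0"
    by (rule ortho_cspan'[OF _ assms(7) mem]) (use assms(1) in blast)
  note a = a1 a2
  have "(u1 - u2) \<bullet> (u1 - u2) = 0" using a assms by (simp add: minus_scalar_prod_distrib[of _ p])
  then have z: "u1 - u2 = 0\<^sub>v p" using assms by (intro self_dot_zero) auto
  show ?thesis
  proof (rule eq_vecI)
    show "dim_vec u1 = dim_vec u2" using assms by simp
    fix i assume i: "i < dim_vec u2"
    then have "(u1 - u2) $ i = 0" unfolding z using assms by simp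
    then show "u1 $ i = u2 $ i" using assms i by simp
  qed
qed

definition isproj where
  "isproj p J f h u \<longleftrightarrow> u \<in> carrier_vec p \<and> (\<forall>j\<in>J. u \<bullet> f j = 0) \<and> h - u \<in> cspan p J f"

lemma proj_perp_eq:
  assumes "finite J" "\<And>j. j \<in> J \<Longrightarrow> f j \<in> carrier_vec p" "h \<in> carrier_vec p" "isproj p J f h u"
  shows "proj_perp p (lin_span p (f ` J)) h = u"
proof -
  have eq: "lin_span p (f ` J) = cspan p J f" by (rule lin_span_eq[OF assms(1,2)])
  show ?thesis unfolding proj_perp_def eq
proof (rule the_equality)
  have "\<forall>w\<in>cspan p J f. u \<bullet> w = 0" using assms(4) unfolding isproj_def
    by (auto intro: ortho_cspan[OF assms(2)])
  then show "u \<in> carrier_vec p \<and> (\<forall>w\<in>cspan p J f. u \<bullet> w = 0) \<and> h - u \<in> cspan p J f"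
    using assms(4) unfolding isproj_def by auto
next
  fix v assume v: "v \<in> carrier_vec p \<and> (\<forall>w\<in>cspan p J f. v \<bullet> w = 0) \<and> h - v \<in> cspan p J f"
  have "v \<bullet> f j = 0" if "j \<in> J" for j
    using gen_in_cspan[where f=f and J=J and j=j and p=p, OF assms(1) that assms(2)[OF that]] v by auto
  then have "\<forall>j\<in>J. v \<bullet> f j = 0" by blast
  moreover have uu: "u \<in> carrier_vec p" "\<forall>j\<in>J. u \<bullet> f j = 0" "h - u \<in> cspan p J f"
    using assms(4) unfolding isproj_def by auto
  ultimately show "v = u" using proj_unique[OF assms(2,3) _ _ _ uu] v by blast
qed
qed

lemma proj_ex: "finite J \<Longrightarrow> (\<And>j. j \<in> J \<Longrightarrow> f j \<in> carrier_vec p) \<Longrightarrow> h \<in> carrier_vec p \<Longrightarrow>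
  \<exists>u. isproj p J f h u"
  unfolding isproj_def by (rule proj_exists)



lemma mat_eq_one_if_fix:
  fixes M :: "real mat"
  assumes M: "M \<in> carrier_mat m m" and fx: "\<And>v. v \<in> carrier_vec m \<Longrightarrow> M *\<^sub>v v = v"
  shows "M = 1\<^sub>m m"
proof (rule eq_matI)
  fix i k assume i: "i < dim_row (1\<^sub>m m)" and k: "k < dim_col (1\<^sub>m m)"
  then have i': "i < m" and k': "k < m" by auto
  have "M $$ (i, k) = row M i \<bullet> unit_vec m k" using M i' k' by simp
  also have "\<dots> = (M *\<^sub>v unit_vec m k) $ i" using M i' by simp
  also have "\<dots> = unit_vec m k $ i" using fx[of "unit_vec m k"] by simp
  also have "\<dots> = 1\<^sub>m m $$ (i, k)" using i' k' by simp
  finally show "M $$ (i, k) = 1\<^sub>m m $$ (i, k)" .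
qed (use M in auto)

definition penrose :: "real mat \<Rightarrow> real mat \<Rightarrow> bool" where
  "penrose A X \<longleftrightarrow> X \<in> carrier_mat (dim_col A) (dim_row A) \<and>
      A * X * A = A \<and> X * A * X = X \<and>
      transpose_mat (A * X) = A * X \<and> transpose_mat (X * A) = X * A"

lemma penrose_left:
  fixes A :: "real mat"
  assumes A: "A \<in> carrier_mat p m" and inj: "\<And>v. v \<in> carrier_vec m \<Longrightarrow> A *\<^sub>v v = 0\<^sub>v p \<Longrightarrow> v = 0\<^sub>v m"
    and P: "penrose A X"
  shows "X * A = 1\<^sub>m m"
proof -
  have X: "X \<in> carrier_mat m p" using P A unfolding penrose_def by auto
  have AXA: "A * X * A = A" using P unfolding penrose_def by auto
  have XA: "X * A \<in> carrier_mat m m" using X A by simp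
  show ?thesis
  proof (rule mat_eq_one_if_fix[OF XA])
    fix v :: "real vec" assume v: "v \<in> carrier_vec m"
    have w: "(X * A) *\<^sub>v v \<in> carrier_vec m" using XA v by simp
    have "A *\<^sub>v ((X * A) *\<^sub>v v) = (A * (X * A)) *\<^sub>v v" using A XA v by simp
    also have "A * (X * A) = A * X * A" using A X by simp
    finally have e: "A *\<^sub>v ((X * A) *\<^sub>v v) = A *\<^sub>v v" unfolding AXA .
    have "A *\<^sub>v ((X * A) *\<^sub>v v - v) = A *\<^sub>v ((X * A) *\<^sub>v v) - A *\<^sub>v v"
      using A w v by (simp add: mult_minus_distrib_mat_vec)
    also have "\<dots> = 0\<^sub>v p" unfolding e using A v by simp
    finally have "(X * A) *\<^sub>v v - v = 0\<^sub>v m" using inj w v by simp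
    note z = this
    show "(X * A) *\<^sub>v v = v"
    proof (rule eq_vecI)
      show "dim_vec ((X * A) *\<^sub>v v) = dim_vec v" using w v X by simp
      fix i assume i: "i < dim_vec v"
      then have "((X * A) *\<^sub>v v - v) $ i = 0" unfolding z using v by simp
      then show "((X * A) *\<^sub>v v) $ i = v $ i" using w v i by simp
    qed
  qed
qed

lemma penrose_unique:
  fixes A :: "real mat"
  assumes A: "A \<in> carrier_mat p m" and inj: "\<And>v. v \<in> carrier_vec m \<Longrightarrow> A *\<^sub>v v = 0\<^sub>v p \<Longrightarrow> v = 0\<^sub>v m"
    and PX: "penrose A X" and PY: "penrose A Y"
  shows "X = Y"
proof -
  have X: "X \<in> carrier_mat m p" using PX A unfolding penrose_def by auto
  have Y: "Y \<in> carrier_mat m p" using PY A unfolding penrose_def by auto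
  have XA: "X * A = 1\<^sub>m m" by (rule penrose_left[OF A inj PX])
  have YA: "Y * A = 1\<^sub>m m" by (rule penrose_left[OF A inj PY])
  have sX: "transpose_mat (A * X) = A * X" using PX unfolding penrose_def by auto
  have sY: "transpose_mat (A * Y) = A * Y" using PY unfolding penrose_def by auto
  have AXc: "A * X \<in> carrier_mat p p" using A X by simp
  have AYc: "A * Y \<in> carrier_mat p p" using A Y by simp
  have "A * X = A * (Y * A) * X" using YA A by simp
  also have "A * (Y * A) = (A * Y) * A" using assoc_mult_mat[OF A Y A] by simp
  also have "(A * Y) * A * X = (A * Y) * (A * X)" using assoc_mult_mat[OF AYc A X] .
  finally have e1: "A * X = (A * Y) * (A * X)" .
  have "A * X = transpose_mat (A * X)" using sX by simp
  also have "\<dots> = transpose_mat (A * X) * transpose_mat (A * Y)"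
    by (subst e1, subst transpose_mult[OF AYc AXc]) simp
  also have "\<dots> = (A * X) * (A * Y)" using sX sY by simp
  also have "\<dots> = A * X * A * Y" using assoc_mult_mat[OF AXc A Y] by simp
  also have "A * X * A = A" using assoc_mult_mat[OF A X A] XA A by simp
  finally have e2: "A * X = A * Y" .
  have "X = (X * A) * X" using XA X by simp
  also have "\<dots> = X * (A * X)" using assoc_mult_mat[OF X A X] .
  also have "\<dots> = X * (A * Y)" using e2 by simp
  also have "\<dots> = (X * A) * Y" using assoc_mult_mat[OF X A Y] by simp
  also have "\<dots> = Y" using XA Y by simp
  finally show ?thesis .
qed

lemma penrose_exists:
  fixes A :: "real mat"
  assumes A: "A \<in> carrier_mat p m" and inj: "\<And>v. v \<in> carrier_vec m \<Longrightarrow> A *\<^sub>v v = 0\<^sub>v p \<Longrightarrow> v = 0\<^sub>v m"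
  shows "\<exists>X. penrose A X"
proof -
  define B where "B = transpose_mat A * A"
  have B: "B \<in> carrier_mat m m" unfolding B_def using A by simp
  have AT: "transpose_mat A \<in> carrier_mat m p" using A by simp
  have Bs: "transpose_mat B = B" unfolding B_def using transpose_mult[OF AT A] by simp
  have "det B \<noteq> 0"
  proof
    assume "det B = 0"
    then obtain v where v: "v \<in> carrier_vec m" "v \<noteq> 0\<^sub>v m" "B *\<^sub>v v = 0\<^sub>v m"
      using det_0_iff_vec_prod_zero[OF B] by auto
    have Av: "A *\<^sub>v v \<in> carrier_vec p" using A v by simp
    have "v \<bullet> (B *\<^sub>v v) = v \<bullet> (transpose_mat A *\<^sub>v (A *\<^sub>v v))"
      unfolding B_def using assoc_mult_mat_vec[OF AT A v(1)] by simp
    also have "\<dots> = (transpose_mat A *\<^sub>v (A *\<^sub>v v)) \<bullet> v"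
      by (rule comm_scalar_prod[OF v(1)]) (use AT Av in simp)
    also have "\<dots> = (A *\<^sub>v v) \<bullet> (A *\<^sub>v v)" by (rule transpose_vec_mult_scalar[OF A v(1) Av])
    finally have "(A *\<^sub>v v) \<bullet> (A *\<^sub>v v) = 0" using v(3) v(1) by simp
    then have "A *\<^sub>v v = 0\<^sub>v p" using self_dot_zero[OF Av] by simp
    then show False using inj v by auto
  qed
  then have "B \<in> Units (ring_mat TYPE(real) m ())" by (rule det_non_zero_imp_unit[OF B])
  then have "\<exists>Bi \<in> carrier_mat m m. Bi * B = 1\<^sub>m m \<and> B * Bi = 1\<^sub>m m"
    unfolding Units_def ring_mat_def by simp
  then obtain Bi where Bi: "Bi \<in> carrier_mat m m" "Bi * B = 1\<^sub>m m" "B * Bi = 1\<^sub>m m"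
    by blast
  have BiT: "transpose_mat Bi = Bi"
  proof -
    have "transpose_mat (B * Bi) = transpose_mat Bi * transpose_mat B" by (rule transpose_mult[OF B Bi(1)])
    then have "transpose_mat Bi * B = 1\<^sub>m m" using Bi(3) Bs by simp
    then have "transpose_mat Bi = transpose_mat Bi * (B * Bi)" using Bi by simp
    also have "\<dots> = (transpose_mat Bi * B) * Bi" using assoc_mult_mat[of "transpose_mat Bi" m m B m Bi m] Bi B by simp
    also have "\<dots> = Bi" using \<open>transpose_mat Bi * B = 1\<^sub>m m\<close> Bi by simp
    finally show ?thesis .
  qed
  define X where "X = Bi * transpose_mat A"
  have X: "X \<in> carrier_mat m p" unfolding X_def using Bi A by simp
  have "X * A = Bi * (transpose_mat A * A)" unfolding X_def using assoc_mult_mat[OF Bi(1) AT A] .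
  then have XA: "X * A = 1\<^sub>m m" using Bi(2) unfolding B_def by simp
  have "penrose A X"
    unfolding penrose_def
  proof (intro conjI)
    show "X \<in> carrier_mat (dim_col A) (dim_row A)" using X A by simp
    show "A * X * A = A" using XA A X assoc_mult_mat[OF A X A] by simp
    show "X * A * X = X" using XA X by simp
    show "transpose_mat (X * A) = X * A" using XA by simp
    show "transpose_mat (A * X) = A * X"
    proof -
      have "transpose_mat (A * X) = transpose_mat X * transpose_mat A" using transpose_mult[OF A X] .
      also have "transpose_mat X = A * transpose_mat Bi" unfolding X_def using transpose_mult[OF Bi(1) AT] by simp
      also have "\<dots> * transpose_mat A = A * X" unfolding X_def BiT using assoc_mult_mat[OF A Bi(1) AT] .
      finally show ?thesis .
    qed
  qed
  then show ?thesis by blast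
qed

lemma pinv_left:
  fixes A :: "real mat"
  assumes A: "A \<in> carrier_mat p m" and inj: "\<And>v. v \<in> carrier_vec m \<Longrightarrow> A *\<^sub>v v = 0\<^sub>v p \<Longrightarrow> v = 0\<^sub>v m"
  shows "pinv A * A = 1\<^sub>m m \<and> pinv A \<in> carrier_mat m p"
proof -
  obtain X where X: "penrose A X" using penrose_exists[OF A inj] by blast
  have "pinv A = X" unfolding pinv_def
  proof (rule the_equality)
    show "X \<in> carrier_mat (dim_col A) (dim_row A) \<and> A * X * A = A \<and> X * A * X = X \<and>
      transpose_mat (A * X) = A * X \<and> transpose_mat (X * A) = X * A" using X unfolding penrose_def .
    fix Y assume "Y \<in> carrier_mat (dim_col A) (dim_row A) \<and> A * Y * A = A \<and> Y * A * Y = Y \<and>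
      transpose_mat (A * Y) = A * Y \<and> transpose_mat (Y * A) = Y * A"
    then have "penrose A Y" unfolding penrose_def .
    then show "Y = X" using penrose_unique[OF A inj X] by simp
  qed
  then show ?thesis using penrose_left[OF A inj X] X A unfolding penrose_def by simp
qed



lemma sum_split:
  fixes X :: "nat \<Rightarrow> real"
  assumes "finite S" "i \<notin> S" "i < d" "S \<subseteq> {..<d}"
  shows "(\<Sum>j<d. (if j = i then A else if j \<in> S then B j else 0) * X j) = A * X i + (\<Sum>j\<in>S. B j * X j)"
proof -
  have "(\<Sum>j<d. (if j = i then A else if j \<in> S then B j else 0) * X j)
      = (\<Sum>j\<in>insert i S. (if j = i then A else if j \<in> S then B j else 0) * X j)"
    using assms by (intro sum.mono_neutral_cong_right) auto
  also have "\<dots> = A * X i + (\<Sum>j\<in>S. (if j = i then A else if j \<in> S then B j else 0) * X j)"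
    using assms by (simp add: sum.insert)
  also have "(\<Sum>j\<in>S. (if j = i then A else if j \<in> S then B j else 0) * X j) = (\<Sum>j\<in>S. B j * X j)"
    using assms by (intro sum.cong) auto
  finally show ?thesis .
qed

lemma mult_entry:
  fixes A B :: "real mat"
  assumes "A \<in> carrier_mat n m" "B \<in> carrier_mat m q" "i < n" "j < q"
  shows "(A * B) $$ (i, j) = (\<Sum>k<m. A $$ (i, k) * B $$ (k, j))"
  using assms by (simp add: scalar_prod_def atLeast0LessThan)

lemma comb_cong: "(\<And>j. j \<in> J \<Longrightarrow> f j = g j) \<Longrightarrow> comb p J a f = comb p J a g"
  unfolding comb_def by (intro eq_vecI) auto

lemma cspan_cong: assumes "\<And>j. j \<in> J \<Longrightarrow> f j = g j" shows "cspan p J f = cspan p J g"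
proof -
  have "\<And>a. comb p J a f = comb p J a g" by (rule comb_cong) (use assms in auto)
  then show ?thesis unfolding cspan_def by simp
qed

lemma vnorm_smult: "v \<in> carrier_vec p \<Longrightarrow> vnorm (c \<cdot>\<^sub>v v) = \<bar>c\<bar> * vnorm v"
  unfolding vnorm_def by (simp add: real_sqrt_mult)

definition sc :: "nat \<Rightarrow> (nat \<Rightarrow> nat \<Rightarrow> bool) \<Rightarrow> nat \<Rightarrow> nat set" where
  "sc d lt i = {j. j < d \<and> lt i j}"

definition uu :: "real mat \<Rightarrow> (nat \<Rightarrow> nat \<Rightarrow> bool) \<Rightarrow> nat \<Rightarrow> real vec" where
  "uu H lt i = proj_perp (dim_col H) (lin_span (dim_col H) ((\<lambda>j. row H j) ` sc (dim_row H) lt i)) (row H i)"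

definition qq :: "real mat \<Rightarrow> (nat \<Rightarrow> nat \<Rightarrow> bool) \<Rightarrow> nat \<Rightarrow> real vec" where
  "qq H lt i = (1 / vnorm (uu H lt i)) \<cdot>\<^sub>v uu H lt i"

definition coefQ :: "real mat \<Rightarrow> (nat \<Rightarrow> nat \<Rightarrow> bool) \<Rightarrow> nat \<Rightarrow> nat \<Rightarrow> real" where
  "coefQ H lt i = (SOME a. row H i - uu H lt i = comb (dim_col H) (sc (dim_row H) lt i) a (qq H lt))"

definition coefH :: "real mat \<Rightarrow> (nat \<Rightarrow> nat \<Rightarrow> bool) \<Rightarrow> nat \<Rightarrow> nat \<Rightarrow> real" where
  "coefH H lt i = (SOME a. row H i - uu H lt i = comb (dim_col H) (sc (dim_row H) lt i) a (row H))"

definition Q0 :: "real mat \<Rightarrow> (nat \<Rightarrow> nat \<Rightarrow> bool) \<Rightarrow> real mat" where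
  "Q0 H lt = mat (dim_row H) (dim_col H) (\<lambda>(i, l). qq H lt i $ l)"

definition R0 :: "real mat \<Rightarrow> (nat \<Rightarrow> nat \<Rightarrow> bool) \<Rightarrow> real mat" where
  "R0 H lt = mat (dim_row H) (dim_row H) (\<lambda>(i, j). if j = i then vnorm (uu H lt i)
      else if j \<in> sc (dim_row H) lt i then coefQ H lt i j else 0)"

context
  fixes H :: "real mat" and lt :: "nat \<Rightarrow> nat \<Rightarrow> bool" and d p :: nat
  assumes H: "H \<in> carrier_mat d p" and rk: "vec_space.rank d H = d" and po: "strict_po_on d lt"
begin

lemma dr: "dim_row H = d" and dc: "dim_col H = p" using H by auto

lemma irr: "i < d \<Longrightarrow> \<not> lt i i" using po unfolding strict_po_on_def by auto

lemma trs: "i < d \<Longrightarrow> j < d \<Longrightarrow> k < d \<Longrightarrow> lt i j \<Longrightarrow> lt j k \<Longrightarrow> lt i k"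
  using po unfolding strict_po_on_def by blast

lemma sc_fin[simp]: "finite (sc d lt i)" unfolding sc_def by simp

lemma sc_sub: "sc d lt i \<subseteq> {..<d}" unfolding sc_def by auto

lemma sc_notin: "i < d \<Longrightarrow> i \<notin> sc d lt i" unfolding sc_def using irr by auto

lemma sc_mono: "i < d \<Longrightarrow> j \<in> sc d lt i \<Longrightarrow> insert j (sc d lt j) \<subseteq> sc d lt i"
  unfolding sc_def using trs by auto

lemma sc_card: "i < d \<Longrightarrow> j \<in> sc d lt i \<Longrightarrow> card (sc d lt j) < card (sc d lt i)"
proof -
  assume a: "i < d" "j \<in> sc d lt i"
  have "sc d lt j \<subset> sc d lt i" using sc_mono[OF a] sc_notin[of j] a unfolding sc_def by auto
  then show ?thesis by (rule psubset_card_mono[OF sc_fin])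
qed

lemma hc[simp]: "row H j \<in> carrier_vec p" using H by auto

lemma u_proj: "i < d \<Longrightarrow> isproj p (sc d lt i) (row H) (row H i) (uu H lt i)"
proof -
  assume i: "i < d"
  obtain u where u: "isproj p (sc d lt i) (row H) (row H i) u" using proj_ex[of "sc d lt i" "row H" p "row H i"] by auto
  have "uu H lt i = u" unfolding uu_def dr dc by (rule proj_perp_eq[OF sc_fin _ hc u]) simp
  then show ?thesis using u by simp
qed

lemma not_in_span:
  assumes i: "i < d" and K: "K \<subseteq> {..<d}" "i \<notin> K"
  shows "row H i \<notin> cspan p K (row H)"
proof
  assume "row H i \<in> cspan p K (row H)"
  then obtain a where a: "row H i = comb p K a (row H)" unfolding cspan_def by blast
  define c where "c j = (if j = i then -1 else if j \<in> K then a j else (0::real))" for j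
  have fK: "finite K" using K finite_subset by blast
  have "c i = 0"
  proof (rule rows_indep[OF H rk _ i])
    fix l assume l: "l < p"
    have "(\<Sum>j<d. c j * H $$ (j, l)) = -1 * H $$ (i, l) + (\<Sum>j\<in>K. a j * H $$ (j, l))"
      unfolding c_def by (rule sum_split[OF fK K(2) i K(1)])
    also have "(\<Sum>j\<in>K. a j * H $$ (j, l)) = comb p K a (row H) $ l"
      using l K H by (auto intro!: sum.cong)
    also have "\<dots> = H $$ (i, l)" unfolding a[symmetric] using l i H by simp
    finally show "(\<Sum>j<d. c j * H $$ (j, l)) = 0" by simp
  qed
  then show False unfolding c_def by simp
qed

lemma u_car: "uu H lt i \<in> carrier_vec p" if "i < d" using u_proj[OF that] unfolding isproj_def by auto

lemma u_orth: "i < d \<Longrightarrow> k \<in> sc d lt i \<Longrightarrow> uu H lt i \<bullet> row H k = 0"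
  using u_proj unfolding isproj_def by auto

lemma u_rest: "i < d \<Longrightarrow> row H i - uu H lt i \<in> cspan p (sc d lt i) (row H)"
  using u_proj unfolding isproj_def by auto

lemma n_pos: "i < d \<Longrightarrow> vnorm (uu H lt i) > 0"
proof -
  assume i: "i < d"
  have "uu H lt i \<noteq> 0\<^sub>v p"
  proof
    assume z: "uu H lt i = 0\<^sub>v p"
    have "row H i - uu H lt i = row H i" unfolding z by (intro eq_vecI) auto
    then show False using u_rest[OF i] not_in_span[OF i sc_sub sc_notin[OF i]] by simp
  qed
  then have "uu H lt i \<bullet> uu H lt i \<noteq> 0" using self_dot_zero u_car[OF i] by blast
  moreover have "uu H lt i \<bullet> uu H lt i \<ge> 0" unfolding scalar_prod_def by (intro sum_nonneg) simp
  ultimately show ?thesis unfolding vnorm_def by simp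
qed

lemma q_car[simp]: "i < d \<Longrightarrow> qq H lt i \<in> carrier_vec p"
  unfolding qq_def using u_car by simp

lemma q_dim[simp]: "i < d \<Longrightarrow> dim_vec (qq H lt i) = p"
  using q_car carrier_vecD by blast

lemma u_eq: "i < d \<Longrightarrow> uu H lt i = vnorm (uu H lt i) \<cdot>\<^sub>v qq H lt i"
  unfolding qq_def using n_pos[of i] u_car[of i] by (intro eq_vecI) auto

lemma q_norm: "i < d \<Longrightarrow> vnorm (qq H lt i) = 1"
  unfolding qq_def using n_pos[of i] u_car[of i] by (simp add: vnorm_smult)

lemma q_span: "i < d \<Longrightarrow> qq H lt i \<in> cspan p (insert i (sc d lt i)) (row H)"
proof -
  assume i: "i < d"
  have fin: "finite (insert i (sc d lt i))" by simp
  have m: "cspan p (sc d lt i) (row H) \<subseteq> cspan p (insert i (sc d lt i)) (row H)"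
    by (rule cspan_mono[OF fin]) auto
  have hi: "row H i \<in> cspan p (insert i (sc d lt i)) (row H)" by (rule gen_in_cspan[OF fin]) auto
  have e: "uu H lt i = row H i - (row H i - uu H lt i)" using u_car[OF i] by (intro eq_vecI) auto
  have "row H i - (row H i - uu H lt i) \<in> cspan p (insert i (sc d lt i)) (row H)"
    by (rule cspan_diff[OF hi]) (use m u_rest[OF i] in blast)
  then have "uu H lt i \<in> cspan p (insert i (sc d lt i)) (row H)" by (simp only: e[symmetric])
  then show ?thesis unfolding qq_def by (rule cspan_smult)
qed

lemma q_orth: "i < d \<Longrightarrow> j \<in> sc d lt i \<Longrightarrow> qq H lt i \<bullet> qq H lt j = 0"
proof -
  assume i: "i < d" and j: "j \<in> sc d lt i"
  have jd: "j < d" using j unfolding sc_def by auto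
  have "qq H lt j \<in> cspan p (sc d lt i) (row H)"
    using q_span[OF jd] cspan_mono[OF sc_fin sc_mono[OF i j]] by blast
  moreover have "\<forall>k\<in>sc d lt i. row H k \<in> carrier_vec p" by simp
  moreover have "\<forall>k\<in>sc d lt i. uu H lt i \<bullet> row H k = 0" using u_orth[OF i] by blast
  ultimately have o: "uu H lt i \<bullet> qq H lt j = 0" using ortho_cspan' by blast
  have "qq H lt i \<bullet> qq H lt j = (1 / vnorm (uu H lt i)) * (uu H lt i \<bullet> qq H lt j)"
    unfolding qq_def[of H lt i] by (rule smult_scalar_prod_distrib[OF u_car[OF i] q_car[OF jd]])
  then show ?thesis using o by simp
qed

lemma key: "i < d \<Longrightarrow> row H i \<in> cspan p (insert i (sc d lt i)) (qq H lt)"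
proof (induction "card (sc d lt i)" arbitrary: i rule: less_induct)
  case less
  note i = less.prems
  have fin: "finite (insert i (sc d lt i))" by simp
  have m: "cspan p (sc d lt i) (qq H lt) \<subseteq> cspan p (insert i (sc d lt i)) (qq H lt)"
    by (rule cspan_mono[OF fin]) auto
  have qi: "qq H lt i \<in> cspan p (insert i (sc d lt i)) (qq H lt)" by (rule gen_in_cspan[OF fin]) (use i in auto)
  have "row H k \<in> cspan p (sc d lt i) (qq H lt)" if k: "k \<in> sc d lt i" for k
  proof -
    have kd: "k < d" using k unfolding sc_def by auto
    have "row H k \<in> cspan p (insert k (sc d lt k)) (qq H lt)" using less.hyps[OF sc_card[OF i k] kd] .
    then show ?thesis using cspan_mono[OF sc_fin sc_mono[OF i k]] by blast
  qed
  then have "row H i - uu H lt i \<in> cspan p (sc d lt i) (qq H lt)"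
    using cspan_trans[OF _ u_rest[OF i]] by blast
  then have r: "row H i - uu H lt i \<in> cspan p (insert i (sc d lt i)) (qq H lt)" using m by blast
  have e: "row H i = uu H lt i + (row H i - uu H lt i)"
    using u_car[OF i] dc by (intro eq_vecI) auto
  have ui: "uu H lt i \<in> cspan p (insert i (sc d lt i)) (qq H lt)"
    by (subst u_eq[OF i]) (rule cspan_smult[OF qi])
  show ?case by (subst e, rule cspan_add[OF ui r])
qed

lemma Veq: "i < d \<Longrightarrow> cspan p (sc d lt i) (row H) = cspan p (sc d lt i) (qq H lt)"
proof
  assume i: "i < d"
  show "cspan p (sc d lt i) (row H) \<subseteq> cspan p (sc d lt i) (qq H lt)"
  proof
    fix v assume v: "v \<in> cspan p (sc d lt i) (row H)"
    show "v \<in> cspan p (sc d lt i) (qq H lt)"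
    proof (rule cspan_trans[OF _ v])
      fix k assume k: "k \<in> sc d lt i"
      then have kd: "k < d" unfolding sc_def by auto
      show "row H k \<in> cspan p (sc d lt i) (qq H lt)"
        using key[OF kd] cspan_mono[OF sc_fin sc_mono[OF i k]] by blast
    qed
  qed
  show "cspan p (sc d lt i) (qq H lt) \<subseteq> cspan p (sc d lt i) (row H)"
  proof
    fix v assume v: "v \<in> cspan p (sc d lt i) (qq H lt)"
    show "v \<in> cspan p (sc d lt i) (row H)"
    proof (rule cspan_trans[OF _ v])
      fix k assume k: "k \<in> sc d lt i"
      then have kd: "k < d" unfolding sc_def by auto
      show "qq H lt k \<in> cspan p (sc d lt i) (row H)"
        using q_span[OF kd] cspan_mono[OF sc_fin sc_mono[OF i k]] by blast
    qed
  qed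
qed


lemma coefQ_prop: "i < d \<Longrightarrow> row H i - uu H lt i = comb p (sc d lt i) (coefQ H lt i) (qq H lt)"
proof -
  assume i: "i < d"
  have "row H i - uu H lt i \<in> cspan p (sc d lt i) (qq H lt)" using u_rest[OF i] Veq[OF i] by simp
  then have "\<exists>a. row H i - uu H lt i = comb p (sc d lt i) a (qq H lt)" unfolding cspan_def by blast
  then show ?thesis unfolding coefQ_def dr dc by (rule someI_ex)
qed

lemma coefH_prop: "i < d \<Longrightarrow> row H i - uu H lt i = comb p (sc d lt i) (coefH H lt i) (row H)"
proof -
  assume i: "i < d"
  have "\<exists>a. row H i - uu H lt i = comb p (sc d lt i) a (row H)" using u_rest[OF i] unfolding cspan_def by blast
  then show ?thesis unfolding coefH_def dr dc by (rule someI_ex)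
qed

lemma Q0_car: "Q0 H lt \<in> carrier_mat d p" unfolding Q0_def dr dc by simp
lemma R0_car: "R0 H lt \<in> carrier_mat d d" unfolding R0_def dr by simp
lemma Q0_row: "i < d \<Longrightarrow> row (Q0 H lt) i = qq H lt i"
  unfolding Q0_def dr dc by (intro eq_vecI) auto
lemma Q0_idx: "i < d \<Longrightarrow> l < p \<Longrightarrow> Q0 H lt $$ (i, l) = qq H lt i $ l"
  unfolding Q0_def dr dc by simp
lemma R0_idx: "i < d \<Longrightarrow> j < d \<Longrightarrow> R0 H lt $$ (i, j) = (if j = i then vnorm (uu H lt i)
      else if j \<in> sc d lt i then coefQ H lt i j else 0)"
  unfolding R0_def dr by simp

lemma RQ0: "H = R0 H lt * Q0 H lt"
proof (rule eq_matI)
  show "dim_row H = dim_row (R0 H lt * Q0 H lt)" using R0_car dr by simp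
  show "dim_col H = dim_col (R0 H lt * Q0 H lt)" using Q0_car dc by simp
  fix i l assume "i < dim_row (R0 H lt * Q0 H lt)" "l < dim_col (R0 H lt * Q0 H lt)"
  then have i: "i < d" and l: "l < p" using R0_car Q0_car by auto
  have "(R0 H lt * Q0 H lt) $$ (i, l) = (\<Sum>j<d. R0 H lt $$ (i, j) * Q0 H lt $$ (j, l))"
    by (rule mult_entry[OF R0_car Q0_car i l])
  also have "\<dots> = (\<Sum>j<d. (if j = i then vnorm (uu H lt i) else if j \<in> sc d lt i then coefQ H lt i j else 0)
        * qq H lt j $ l)"
    using R0_idx[OF i] Q0_idx l by (intro sum.cong) auto
  also have "\<dots> = vnorm (uu H lt i) * qq H lt i $ l + (\<Sum>j\<in>sc d lt i. coefQ H lt i j * qq H lt j $ l)"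
    by (rule sum_split[OF sc_fin sc_notin[OF i] i sc_sub])
  also have "vnorm (uu H lt i) * qq H lt i $ l = uu H lt i $ l"
    using arg_cong[OF u_eq[OF i], of "\<lambda>v. v $ l"] l i by simp
  also have "(\<Sum>j\<in>sc d lt i. coefQ H lt i j * qq H lt j $ l) = (row H i - uu H lt i) $ l"
    unfolding coefQ_prop[OF i] using l by simp
  also have "uu H lt i $ l + (row H i - uu H lt i) $ l = H $$ (i, l)"
    using u_car[OF i] l i H by simp
  finally show "H $$ (i, l) = (R0 H lt * Q0 H lt) $$ (i, l)" by simp
qed

lemma exist: "is_poRQ d p lt H (R0 H lt) (Q0 H lt)"
  unfolding is_poRQ_def
proof (intro conjI allI impI ballI)
  show "R0 H lt \<in> carrier_mat d d" by (rule R0_car)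
  show "Q0 H lt \<in> carrier_mat d p" by (rule Q0_car)
  show "H = R0 H lt * Q0 H lt" by (rule RQ0)
  fix i assume i: "i < d"
  show "0 \<le> R0 H lt $$ (i, i)" using R0_idx[OF i i] n_pos[OF i] by simp
  show "vnorm (row (Q0 H lt) i) = 1" using Q0_row[OF i] q_norm[OF i] by simp
  {
    fix j assume j: "j < d" "\<not> (lt i j \<or> i = j)"
    then show "R0 H lt $$ (i, j) = 0" using R0_idx[OF i j(1)] unfolding sc_def by auto
  }
  fix v assume v: "v \<in> lin_span p {row (Q0 H lt) j |j. j < d \<and> lt i j}"
  have "{row (Q0 H lt) j |j. j < d \<and> lt i j} = (\<lambda>j. row (Q0 H lt) j) ` sc d lt i"
    unfolding sc_def by auto
  also have "\<dots> = qq H lt ` sc d lt i" using Q0_row by (intro image_cong) (auto simp: sc_def)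
  also have "lin_span p (qq H lt ` sc d lt i) = cspan p (sc d lt i) (qq H lt)"
    by (rule lin_span_eq[OF sc_fin]) (auto simp: sc_def)
  finally have "v \<in> cspan p (sc d lt i) (qq H lt)" using v by simp
  moreover have "\<forall>j\<in>sc d lt i. qq H lt j \<in> carrier_vec p" by (auto simp: sc_def)
  moreover have "\<forall>j\<in>sc d lt i. qq H lt i \<bullet> qq H lt j = 0" using q_orth[OF i] by auto
  ultimately have "qq H lt i \<bullet> v = 0" using ortho_cspan' by blast
  then show "row (Q0 H lt) i \<bullet> v = 0" using Q0_row[OF i] by simp
qed


lemma qq_indep:
  assumes z: "\<And>l. l < p \<Longrightarrow> (\<Sum>j<d. c j * qq H lt j $ l) = 0" and k: "k < d"
  shows "c k = 0"
proof -
  define T where "T j k = (if k = j then 1 / vnorm (uu H lt j) else if k \<in> sc d lt j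
      then - (1 / vnorm (uu H lt j)) * coefH H lt j k else 0)" for j k
  have qT: "qq H lt j $ l = (\<Sum>k<d. T j k * H $$ (k, l))" if j: "j < d" and l: "l < p" for j l
  proof -
    have "(\<Sum>k<d. T j k * H $$ (k, l)) = 1 / vnorm (uu H lt j) * H $$ (j, l)
        + (\<Sum>k\<in>sc d lt j. (- (1 / vnorm (uu H lt j)) * coefH H lt j k) * H $$ (k, l))"
      unfolding T_def by (rule sum_split[OF sc_fin sc_notin[OF j] j sc_sub])
    also have "(\<Sum>k\<in>sc d lt j. (- (1 / vnorm (uu H lt j)) * coefH H lt j k) * H $$ (k, l))
        = - (1 / vnorm (uu H lt j)) * (\<Sum>k\<in>sc d lt j. coefH H lt j k * H $$ (k, l))"
      by (simp add: sum_distrib_left mult.assoc)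
    also have "(\<Sum>k\<in>sc d lt j. coefH H lt j k * H $$ (k, l)) = (row H j - uu H lt j) $ l"
      unfolding coefH_prop[OF j] using l H by (auto intro!: sum.cong simp: sc_def)
    also have "(row H j - uu H lt j) $ l = H $$ (j, l) - uu H lt j $ l"
      using l j H u_car[OF j] by simp
    finally have "(\<Sum>k<d. T j k * H $$ (k, l)) = 1 / vnorm (uu H lt j) * uu H lt j $ l"
      by (simp add: algebra_simps)
    moreover have "qq H lt j $ l = 1 / vnorm (uu H lt j) * uu H lt j $ l"
      unfolding qq_def using u_car[OF j] l by simp
    ultimately show ?thesis by simp
  qed
  have zT: "(\<Sum>j<d. c j * T j k) = 0" if k: "k < d" for k
  proof (rule rows_indep[OF H rk _ k])
    fix l assume l: "l < p"
    have "(\<Sum>k<d. (\<Sum>j<d. c j * T j k) * H $$ (k, l)) = (\<Sum>k<d. \<Sum>j<d. c j * (T j k * H $$ (k, l)))"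
      by (simp add: sum_distrib_right mult.assoc)
    also have "\<dots> = (\<Sum>j<d. \<Sum>k<d. c j * (T j k * H $$ (k, l)))" by (rule sum.swap)
    also have "\<dots> = (\<Sum>j<d. c j * qq H lt j $ l)"
      using qT l by (simp add: sum_distrib_left)
    also have "\<dots> = 0" using z[OF l] .
    finally show "(\<Sum>k<d. (\<Sum>j<d. c j * T j k) * H $$ (k, l)) = 0" .
  qed
  have "\<forall>k. k < d \<longrightarrow> c k = 0"
  proof (intro allI)
    fix k show "k < d \<longrightarrow> c k = 0"
    proof (induction "d - card (sc d lt k)" arbitrary: k rule: less_induct)
      case less
      show ?case
      proof
        assume k: "k < d"
        have rest: "c j * T j k = 0" if j: "j \<in> {..<d} - {k}" for j
        proof (cases "k \<in> sc d lt j")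
          case True
          have jd: "j < d" using j by auto
          have "card (sc d lt k) < card (sc d lt j)" by (rule sc_card[OF jd True])
          moreover have "card (sc d lt j) \<le> d" using card_mono[OF _ sc_sub, of j] by simp
          ultimately have "d - card (sc d lt j) < d - card (sc d lt k)" by simp
          then have "c j = 0" using less.hyps jd by blast
          then show ?thesis by simp
        next
          case False
          then show ?thesis using j unfolding T_def by auto
        qed
        have "0 = (\<Sum>j<d. c j * T j k)" using zT[OF k] by simp
        also have "\<dots> = c k * T k k + (\<Sum>j\<in>{..<d} - {k}. c j * T j k)"
          using k by (subst sum.remove[of _ k]) auto
        also have "(\<Sum>j\<in>{..<d} - {k}. c j * T j k) = 0" using rest by (intro sum.neutral) blast
        finally have "c k * (1 / vnorm (uu H lt k)) = 0" unfolding T_def by simp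
        then show "c k = 0" using n_pos[OF k] by simp
      qed
    qed
  qed
  then show ?thesis using k by blast
qed

lemma unique:
  assumes RQ: "is_poRQ d p lt H R Q"
  shows "R = R0 H lt \<and> Q = Q0 H lt"
proof -
  have R: "R \<in> carrier_mat d d" and Q: "Q \<in> carrier_mat d p" and HRQ: "H = R * Q"
    and Rd: "\<And>i. i < d \<Longrightarrow> R $$ (i, i) \<ge> 0"
    and Rz: "\<And>i j. i < d \<Longrightarrow> j < d \<Longrightarrow> \<not> (lt i j \<or> i = j) \<Longrightarrow> R $$ (i, j) = 0"
    and Qn: "\<And>i. i < d \<Longrightarrow> vnorm (row Q i) = 1"
    and Qo: "\<And>i v. i < d \<Longrightarrow> v \<in> lin_span p {row Q j | j. j < d \<and> lt i j} \<Longrightarrow> row Q i \<bullet> v = 0"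
    using RQ unfolding is_poRQ_def by auto
  have Qc[simp]: "row Q j \<in> carrier_vec p" for j using Q by auto
  have RQrow: "row H i = R $$ (i, i) \<cdot>\<^sub>v row Q i + comb p (sc d lt i) (\<lambda>j. R $$ (i, j)) (row Q)"
    if i: "i < d" for i
  proof (rule eq_vecI)
    show "dim_vec (row H i) = dim_vec (R $$ (i, i) \<cdot>\<^sub>v row Q i + comb p (sc d lt i) (\<lambda>j. R $$ (i, j)) (row Q))"
      using H Q by simp
    fix l assume "l < dim_vec (R $$ (i, i) \<cdot>\<^sub>v row Q i + comb p (sc d lt i) (\<lambda>j. R $$ (i, j)) (row Q))"
    then have l: "l < p" by simp
    have "row H i $ l = (R * Q) $$ (i, l)" using i l H by (simp add: HRQ[symmetric])
    also have "\<dots> = (\<Sum>j<d. R $$ (i, j) * Q $$ (j, l))" by (rule mult_entry[OF R Q i l])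
    also have "\<dots> = (\<Sum>j<d. (if j = i then R $$ (i, i) else if j \<in> sc d lt i then R $$ (i, j) else 0) * Q $$ (j, l))"
      using Rz[OF i] by (intro sum.cong refl) (auto simp: sc_def)
    also have "\<dots> = R $$ (i, i) * Q $$ (i, l) + (\<Sum>j\<in>sc d lt i. R $$ (i, j) * Q $$ (j, l))"
      by (rule sum_split[OF sc_fin sc_notin[OF i] i sc_sub])
    also have "\<dots> = (R $$ (i, i) \<cdot>\<^sub>v row Q i + comb p (sc d lt i) (\<lambda>j. R $$ (i, j)) (row Q)) $ l"
      using l i Q by (auto intro!: sum.cong simp: sc_def)
    finally show "row H i $ l = (R $$ (i, i) \<cdot>\<^sub>v row Q i + comb p (sc d lt i) (\<lambda>j. R $$ (i, j)) (row Q)) $ l" .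
  qed
  have Qrow: "i < d \<Longrightarrow> row Q i = qq H lt i" for i
  proof (induction "card (sc d lt i)" arbitrary: i rule: less_induct)
    case less
    note i = less.prems
    have IH: "row Q j = qq H lt j" if j: "j \<in> sc d lt i" for j
      using less.hyps[OF sc_card[OF i j]] j unfolding sc_def by auto
    define c where "c = R $$ (i, i)"
    define u' where "u' = c \<cdot>\<^sub>v row Q i"
    define w where "w = comb p (sc d lt i) (\<lambda>j. R $$ (i, j)) (row Q)"
    have wq: "w = comb p (sc d lt i) (\<lambda>j. R $$ (i, j)) (qq H lt)" unfolding w_def by (rule comb_cong) (rule IH)
    have spQ: "cspan p (sc d lt i) (row Q) = cspan p (sc d lt i) (qq H lt)" by (rule cspan_cong) (rule IH)
    have e: "row H i = u' + w" using RQrow[OF i] unfolding u'_def w_def c_def .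
    have uc: "u' \<in> carrier_vec p" unfolding u'_def by simp
    have wc: "w \<in> carrier_vec p" unfolding w_def by simp
    have hw: "row H i - u' = w" unfolding e using uc wc by (intro eq_vecI) auto
    have "isproj p (sc d lt i) (row H) (row H i) u'"
      unfolding isproj_def
    proof (intro conjI ballI)
      show "u' \<in> carrier_vec p" unfolding u'_def by simp
      show "row H i - u' \<in> cspan p (sc d lt i) (row H)" unfolding hw wq Veq[OF i] by simp
      fix k assume k: "k \<in> sc d lt i"
      have "row H k \<in> cspan p (sc d lt i) (row H)" by (rule gen_in_cspan[OF sc_fin k hc])
      then have hk: "row H k \<in> cspan p (sc d lt i) (row Q)" unfolding spQ Veq[OF i] .
      have "{row Q j | j. j < d \<and> lt i j} = row Q ` sc d lt i" unfolding sc_def by auto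
      then have "lin_span p {row Q j | j. j < d \<and> lt i j} = cspan p (sc d lt i) (row Q)"
        using lin_span_eq[where J="sc d lt i" and f="row Q" and p=p] by simp
      then have "row Q i \<bullet> row H k = 0" using Qo[OF i] hk by simp
      then show "u' \<bullet> row H k = 0" unfolding u'_def using smult_scalar_prod_distrib[OF Qc[of i] hc[of k], of c] by simp
    qed
    note pu = this
    have uq: "u' = uu H lt i"
      by (rule proj_unique[of "sc d lt i" "row H" p "row H i"]) (use pu u_proj[OF i] in \<open>auto simp: isproj_def\<close>)
    have c0: "c \<ge> 0" unfolding c_def using Rd[OF i] .
    have nu: "vnorm (uu H lt i) = c" unfolding uq[symmetric] u'_def using Qn[OF i] c0
      by (simp add: vnorm_smult[OF Qc[of i]])
    then have cpos: "c > 0" using n_pos[OF i] by simp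
    have nu': "vnorm (c \<cdot>\<^sub>v row Q i) = c" using nu unfolding uq[symmetric] u'_def .
    show "row Q i = qq H lt i" unfolding qq_def uq[symmetric] u'_def
      using cpos nu' by (intro eq_vecI) auto
  qed
  have QQ: "Q = Q0 H lt"
  proof (rule eq_matI)
    fix i l assume "i < dim_row (Q0 H lt)" "l < dim_col (Q0 H lt)"
    then have i: "i < d" and l: "l < p" using Q0_car by auto
    have "Q $$ (i, l) = row Q i $ l" using Q i l by simp
    also have "\<dots> = Q0 H lt $$ (i, l)" using Qrow[OF i] Q0_idx[OF i l] by simp
    finally show "Q $$ (i, l) = Q0 H lt $$ (i, l)" .
  qed (use Q Q0_car in auto)
  have RR: "R = R0 H lt"
  proof (rule eq_matI)
    fix i j assume "i < dim_row (R0 H lt)" "j < dim_col (R0 H lt)"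
    then have i: "i < d" and j: "j < d" using R0_car by auto
    have "R $$ (i, j) - R0 H lt $$ (i, j) = 0"
    proof (rule qq_indep[OF _ j])
      fix l assume l: "l < p"
      have "(\<Sum>k<d. (R $$ (i, k) - R0 H lt $$ (i, k)) * qq H lt k $ l)
          = (\<Sum>k<d. R $$ (i, k) * Q $$ (k, l)) - (\<Sum>k<d. R0 H lt $$ (i, k) * Q0 H lt $$ (k, l))"
        unfolding sum_subtractf[symmetric] QQ using Q0_idx l by (intro sum.cong) (auto simp: algebra_simps)
      also have "\<dots> = (R * Q) $$ (i, l) - (R0 H lt * Q0 H lt) $$ (i, l)"
        using mult_entry[OF R Q i l] mult_entry[OF R0_car Q0_car i l] by simp
      also have "\<dots> = 0" using HRQ RQ0 by simp
      finally show "(\<Sum>k<d. (R $$ (i, k) - R0 H lt $$ (i, k)) * qq H lt k $ l) = 0" .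
    qed
    then show "R $$ (i, j) = R0 H lt $$ (i, j)" by simp
  qed (use R R0_car in auto)
  show ?thesis using QQ RR by simp
qed


lemma qsteps_eq:
  assumes cons: "\<forall>i<d. \<forall>j<d. lt i j \<longrightarrow> i < j"
  shows "k \<le> d \<Longrightarrow> d - k \<le> i \<Longrightarrow> i < d \<Longrightarrow> qsteps lt H k i = qq H lt i"
proof (induction k arbitrary: i)
  case 0
  then show ?case by simp
next
  case (Suc k)
  define i0 where "i0 = d - Suc k"
  have i0: "i0 < d" using Suc.prems unfolding i0_def by simp
  have f: "qsteps lt H k j = qq H lt j" if j: "j < d" "lt i0 j" for j
  proof -
    have "i0 < j" using cons i0 j by blast
    then have "d - k \<le> j" unfolding i0_def using Suc.prems by simp
    then show ?thesis using Suc.IH[of j] Suc.prems j by simp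
  qed
  have "{qsteps lt H k j |j. j < d \<and> lt i0 j} = (\<lambda>j. qsteps lt H k j) ` sc d lt i0"
    unfolding sc_def by auto
  also have "\<dots> = qq H lt ` sc d lt i0" using f by (intro image_cong) (auto simp: sc_def)
  finally have seteq: "{qsteps lt H k j |j. j < d \<and> lt i0 j} = qq H lt ` sc d lt i0" .
  have "lin_span p (qq H lt ` sc d lt i0) = cspan p (sc d lt i0) (qq H lt)"
    by (rule lin_span_eq[OF sc_fin]) (auto simp: sc_def)
  also have "\<dots> = cspan p (sc d lt i0) (row H)" using Veq[OF i0] by simp
  also have "\<dots> = lin_span p (row H ` sc d lt i0)"
    by (rule lin_span_eq[OF sc_fin, symmetric]) simp
  finally have W: "lin_span p {qsteps lt H k j |j. j < d \<and> lt i0 j} = lin_span p (row H ` sc d lt i0)"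
    unfolding seteq .
  have "qsteps lt H (Suc k) = (qsteps lt H k)(i0 := (1 / vnorm (proj_perp p (lin_span p
      {qsteps lt H k j |j. j < d \<and> lt i0 j}) (row H i0))) \<cdot>\<^sub>v proj_perp p (lin_span p
      {qsteps lt H k j |j. j < d \<and> lt i0 j}) (row H i0))"
    unfolding i0_def by (simp add: Let_def dr dc)
  also have "\<dots> = (qsteps lt H k)(i0 := qq H lt i0)"
    unfolding W qq_def uu_def dr dc by simp
  finally have st: "qsteps lt H (Suc k) = (qsteps lt H k)(i0 := qq H lt i0)" .
  show ?case
  proof (cases "i = i0")
    case True
    then show ?thesis unfolding st by simp
  next
    case False
    then have "d - k \<le> i" using Suc.prems unfolding i0_def by simp
    then show ?thesis unfolding st using False Suc.IH[of i] Suc.prems by simp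
  qed
qed

lemma procQ_eq:
  assumes cons: "\<forall>i<d. \<forall>j<d. lt i j \<longrightarrow> i < j"
  shows "procQ lt H = Q0 H lt"
  unfolding procQ_def Q0_def dr dc
  by (rule eq_matI) (auto simp: qsteps_eq[OF cons])

lemma procR_entry:
  assumes cons: "\<forall>i<d. \<forall>j<d. lt i j \<longrightarrow> i < j" and i: "i < d" and j: "j < d"
  shows "procR lt H $$ (i, j) = R0 H lt $$ (i, j)"
proof -
  define S where "S = {a. lt i a \<or> a = i}"
  define S' where "S' = {a. a < d \<and> a \<in> S}"
  define m where "m = card S'"
  define idx where "idx j = card {a \<in> S. a < j}" for j
  define Qsub where "Qsub = submatrix (Q0 H lt) S UNIV"
  define A where "A = transpose_mat Qsub"
  have S'fin: "finite S'" unfolding S'_def by simp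
  have S'sub: "S' \<subseteq> {..<d}" unfolding S'_def by auto
  have idx_lt: "idx j < m" if "j \<in> S'" for j
  proof -
    have "{a \<in> S. a < j} \<subset> S'" using that unfolding S'_def by auto
    then show ?thesis unfolding idx_def m_def by (rule psubset_card_mono[OF S'fin])
  qed
  have idx_mono: "idx j1 < idx j2" if "j1 \<in> S'" "j2 \<in> S'" "j1 < j2" for j1 j2
  proof -
    have "{a \<in> S. a < j1} \<subset> {a \<in> S. a < j2}" using that unfolding S'_def by auto
    moreover have "finite {a \<in> S. a < j2}" by simp
    ultimately show ?thesis unfolding idx_def using psubset_card_mono by blast
  qed
  have inj: "inj_on idx S'"
  proof (rule inj_onI)
    fix x y assume "x \<in> S'" "y \<in> S'" "idx x = idx y"
    then show "x = y" using idx_mono by (metis less_irrefl linorder_neqE_nat)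
  qed
  have img: "idx ` S' = {..<m}"
  proof (rule card_subset_eq)
    show "finite {..<m}" by simp
    show "idx ` S' \<subseteq> {..<m}" using idx_lt by auto
    show "card (idx ` S') = card {..<m}" using card_image[OF inj] unfolding m_def by simp
  qed
  have bij: "bij_betw idx S' {..<m}" unfolding bij_betw_def using inj img by simp
  have pk: "pick S (idx j) = j" if "j \<in> S'" for j
    unfolding idx_def by (rule pick_card_in_set) (use that in \<open>auto simp: S'_def\<close>)
  have Qsub_car: "Qsub \<in> carrier_mat m p"
    unfolding Qsub_def m_def S'_def by (rule carrier_matI) (use Q0_car in \<open>auto simp: dim_submatrix\<close>)
  have A_car: "A \<in> carrier_mat p m" unfolding A_def using Qsub_car by simp
  have A_idx: "A $$ (l, idx j) = qq H lt j $ l" if "j \<in> S'" "l < p" for j l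
  proof -
    have jd: "j < d" using that unfolding S'_def by auto
    have "A $$ (l, idx j) = Qsub $$ (idx j, l)" unfolding A_def using Qsub_car that idx_lt by simp
    also have "\<dots> = submatrix (Q0 H lt) S UNIV $$ (card {a\<in>S. a < j}, card {a\<in>UNIV. a < l})"
      unfolding Qsub_def idx_def by simp
    also have "\<dots> = Q0 H lt $$ (j, l)"
      by (rule submatrix_index_card) (use Q0_car that jd in \<open>auto simp: S'_def\<close>)
    also have "\<dots> = qq H lt j $ l" using Q0_idx jd that by simp
    finally show ?thesis .
  qed
  have reidx: "(\<Sum>k<m. g k) = (\<Sum>j\<in>S'. g (idx j))" for g :: "nat \<Rightarrow> real"
    using sum.reindex_bij_betw[OF bij, of g] by simp
  have Ainj: "v = 0\<^sub>v m" if v: "v \<in> carrier_vec m" "A *\<^sub>v v = 0\<^sub>v p" for v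
  proof -
    define c where "c j = (if j \<in> S' then v $ idx j else 0)" for j
    have "c j = 0" if "j < d" for j
    proof (rule qq_indep[OF _ that])
      fix l assume l: "l < p"
      have "(\<Sum>j<d. c j * qq H lt j $ l) = (\<Sum>j\<in>S'. v $ idx j * qq H lt j $ l)"
        unfolding c_def using S'fin S'sub by (intro sum.mono_neutral_cong_right) auto
      also have "\<dots> = (\<Sum>j\<in>S'. A $$ (l, idx j) * v $ idx j)" using A_idx l by (intro sum.cong) auto
      also have "\<dots> = (\<Sum>k<m. A $$ (l, k) * v $ k)" using reidx by simp
      also have "\<dots> = (A *\<^sub>v v) $ l" using A_car v(1) l by (simp add: scalar_prod_def atLeast0LessThan)
      also have "\<dots> = 0" using v l by simp
      finally show "(\<Sum>j<d. c j * qq H lt j $ l) = 0" .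
    qed
    note cz = this
    have "v $ idx j = 0" if jS: "j \<in> S'" for j
    proof -
      have "j < d" using jS S'sub by auto
      then show ?thesis using cz[of j] jS unfolding c_def by simp
    qed
    note vz = this
    have "v $ k = 0" if k: "k < m" for k
    proof -
      have "k \<in> idx ` S'" using k img by simp
      then obtain j where "j \<in> S'" "k = idx j" by blast
      then show ?thesis using vz by simp
    qed
    then show ?thesis using v by (intro eq_vecI) auto
  qed
  define r0 where "r0 = vec m (\<lambda>k. R0 H lt $$ (i, pick S k))"
  have r0c: "r0 \<in> carrier_vec m" unfolding r0_def by simp
  have Ar0: "A *\<^sub>v r0 = row H i"
  proof (rule eq_vecI)
    show "dim_vec (A *\<^sub>v r0) = dim_vec (row H i)" using A_car H by simp
    fix l assume "l < dim_vec (row H i)"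
    then have l: "l < p" using H by simp
    have "(A *\<^sub>v r0) $ l = (\<Sum>k<m. A $$ (l, k) * r0 $ k)"
      using A_car l r0c by (simp add: scalar_prod_def atLeast0LessThan)
    also have "\<dots> = (\<Sum>j\<in>S'. A $$ (l, idx j) * r0 $ idx j)" using reidx by simp
    also have "\<dots> = (\<Sum>j\<in>S'. R0 H lt $$ (i, j) * Q0 H lt $$ (j, l))"
      using A_idx l idx_lt pk Q0_idx by (intro sum.cong) (auto simp: r0_def S'_def)
    also have "\<dots> = (\<Sum>j<d. R0 H lt $$ (i, j) * Q0 H lt $$ (j, l))"
    proof (rule sum.mono_neutral_cong_left[OF _ S'sub])
      show "\<forall>j\<in>{..<d} - S'. R0 H lt $$ (i, j) * Q0 H lt $$ (j, l) = 0"
        using R0_idx[OF i] by (auto simp: S'_def S_def sc_def)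
    qed auto
    also have "\<dots> = (R0 H lt * Q0 H lt) $$ (i, l)" using mult_entry[OF R0_car Q0_car i l] by simp
    also have "\<dots> = row H i $ l" using RQ0 i l H by (simp add: RQ0[symmetric])
    finally show "(A *\<^sub>v r0) $ l = row H i $ l" .
  qed
  have pv: "pinv A * A = 1\<^sub>m m \<and> pinv A \<in> carrier_mat m p" by (rule pinv_left[OF A_car Ainj]) auto
  have "pinv A *\<^sub>v row H i = r0"
    unfolding Ar0[symmetric] using pv A_car r0c by (simp add: assoc_mult_mat_vec[symmetric, of _ m p])
  note r = this
  have "procR lt H $$ (i, j) = (if j \<in> S then (pinv A *\<^sub>v row H i) $ idx j else 0)"
    unfolding procR_def procQ_eq[OF cons] A_def Qsub_def S_def idx_def using i j dr by (simp add: Let_def)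
  also have "\<dots> = R0 H lt $$ (i, j)"
  proof (cases "j \<in> S")
    case True
    then have jS: "j \<in> S'" using j unfolding S'_def by auto
    show ?thesis unfolding r using True idx_lt[OF jS] pk[OF jS] by (simp add: r0_def)
  next
    case False
    then show ?thesis using R0_idx[OF i j] by (auto simp: S_def sc_def)
  qed
  finally show ?thesis .
qed

lemma procR_eq:
  assumes cons: "\<forall>i<d. \<forall>j<d. lt i j \<longrightarrow> i < j"
  shows "procR lt H = R0 H lt"
proof (rule eq_matI)
  fix i j assume "i < dim_row (R0 H lt)" "j < dim_col (R0 H lt)"
  then show "procR lt H $$ (i, j) = R0 H lt $$ (i, j)" using R0_car procR_entry[OF cons] by auto
qed (use R0_car dr in \<open>auto simp: procR_def\<close>)

end


theorem proposition7:
  fixes H :: "real mat" and lt :: "nat \<Rightarrow> nat \<Rightarrow> bool" and d p :: nat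
  assumes "H \<in> carrier_mat d p"
    and "vec_space.rank d H = d"
    and "strict_po_on d lt"
  shows "(\<exists>!RQ. is_poRQ d p lt H (fst RQ) (snd RQ)) \<and>
         ((\<forall>i<d. \<forall>j<d. lt i j \<longrightarrow> i < j) \<longrightarrow> is_poRQ d p lt H (procR lt H) (procQ lt H))"
proof -
  have ex: "is_poRQ d p lt H (R0 H lt) (Q0 H lt)" by (rule exist[OF assms])
  have "\<exists>!RQ. is_poRQ d p lt H (fst RQ) (snd RQ)"
  proof (rule ex1I[of _ "(R0 H lt, Q0 H lt)"])
    show "is_poRQ d p lt H (fst (R0 H lt, Q0 H lt)) (snd (R0 H lt, Q0 H lt))" using ex by simp
    fix RQ assume "is_poRQ d p lt H (fst RQ) (snd RQ)"
    then have "fst RQ = R0 H lt \<and> snd RQ = Q0 H lt" by (rule unique[OF assms])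
    then show "RQ = (R0 H lt, Q0 H lt)" by (simp add: prod_eq_iff)
  qed
  moreover have "(\<forall>i<d. \<forall>j<d. lt i j \<longrightarrow> i < j) \<longrightarrow> is_poRQ d p lt H (procR lt H) (procQ lt H)"
    using ex procR_eq[OF assms] procQ_eq[OF assms] by simp
  ultimately show ?thesis by blast
qed

end
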